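(* Let $A=A(u,v)$ be a $\mathbb{C}^k$-valued formal power series mapping, $u,v\in \mathbb{C}^k$, satisfying $\det A_u(u,v)\not\equiv 0$ and $A(0,v)\equiv 0$. Assume that $\mathrm{ord}_u\left(\det A_u(u,v)\right)\leq \nu$ for some nonnegative integer $\nu$. Then for every nonnegative integer $r$ and every formal power series $\psi (t,v)\in \mathbb{C}[[t,v]]$, $t\in \mathbb{C}^k$, if $\mathrm{ord}_u\left(\psi (A(u,v),v)\right) > r(\nu +1)$, then $\mathrm{ord}_t\, \psi (t,v)> r$.
   Context: For $S(x,x')\in\mathbb{C}[[x,x']]$, $\mathrm{ord}_x S$ denotes the order of $S$ viewed as a power series in $x$ with coefficients in $\mathbb{C}[[x']]$ (i.e. the smallest total degree in $x$ of a nonzero term; $+\infty$ if $S=0$). $A_u$ denotes the Jacobian matrix of $A$ with respect to $u$. *)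

theory Defs
  imports Complex_Main "HOL-Library.Extended_Nat" "HOL-Combinatorics.Permutations"
begin

text \<open>Formal power series in u = (u_i), v = (v_i), i ranging over a finite type 'n
  (so k = CARD('n)). f alpha beta is the coefficient of u^alpha v^beta.\<close>
type_synonym 'n fps2 = "('n \<Rightarrow> nat) \<Rightarrow> ('n \<Rightarrow> nat) \<Rightarrow> complex"

definition mdeg :: "('n::finite \<Rightarrow> nat) \<Rightarrow> nat" where
  "mdeg \<alpha> = (\<Sum>i\<in>UNIV. \<alpha> i)"

text \<open>Order in the first block of variables (u, resp. t); infinity for the zero series.\<close>
definition ord_u :: "'n::finite fps2 \<Rightarrow> enat" where
  "ord_u f = (INF \<alpha> \<in> {\<alpha>. \<exists>\<beta>. f \<alpha> \<beta> \<noteq> 0}. enat (mdeg \<alpha>))"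

text \<open>Coefficient of u^gamma v^eps in the product of the finitely many series F i, i in S.\<close>
definition prodcoeff :: "'i set \<Rightarrow> ('i \<Rightarrow> 'n::finite fps2) \<Rightarrow> 'n fps2" where
  "prodcoeff S F \<gamma> \<epsilon> =
     (\<Sum>m \<in> {m \<in> PiE S (\<lambda>_. {a. a \<le> \<gamma>} \<times> {b. b \<le> \<epsilon>}).
               (\<lambda>k. \<Sum>i\<in>S. fst (m i) k) = \<gamma> \<and> (\<lambda>k. \<Sum>i\<in>S. snd (m i) k) = \<epsilon>}.
        \<Prod>i\<in>S. F i (fst (m i)) (snd (m i)))"

definition du :: "'n::finite fps2 \<Rightarrow> 'n \<Rightarrow> 'n fps2" where
  "du f j \<alpha> \<beta> = of_nat (\<alpha> j + 1) * f (\<alpha>(j := \<alpha> j + 1)) \<beta>"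

text \<open>det A_u, where (A_u)_{ij} = dA_i/du_j (Leibniz formula).\<close>
definition jac_det :: "('n::finite \<Rightarrow> 'n fps2) \<Rightarrow> 'n fps2" where
  "jac_det A = (\<lambda>\<gamma> \<epsilon>. \<Sum>\<sigma>\<in>{\<sigma>. \<sigma> permutes (UNIV::'n set)}.
       of_int (sign \<sigma>) * prodcoeff UNIV (\<lambda>i. du (A i) (\<sigma> i)) \<gamma> \<epsilon>)"

text \<open>psi(A(u,v),v) for psi(t,v) = sum psi alpha beta t^alpha v^beta, where A(0,v) = 0.
  Since A^alpha has u-order at least |alpha|, only |alpha| <= |gamma| contributes to the
  coefficient of u^gamma v^eps, so the sum is finite.\<close>
definition subst :: "'n::finite fps2 \<Rightarrow> ('n \<Rightarrow> 'n fps2) \<Rightarrow> 'n fps2" where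
  "subst \<psi> A \<gamma> \<epsilon> =
     (\<Sum>(\<alpha>,\<beta>) \<in> {(\<alpha>,\<beta>). mdeg \<alpha> \<le> mdeg \<gamma> \<and> \<beta> \<le> \<epsilon>}.
        \<psi> \<alpha> \<beta> * prodcoeff {(i,j). j < \<alpha> i} (\<lambda>(i,j). A i) \<gamma> (\<lambda>k. \<epsilon> k - \<beta> k))"

end

theory Submission
  imports Defs "HOL-Library.Function_Algebras" "HOL-Library.Product_Plus" "HOL-Library.Product_Order"
    "HOL-Analysis.Determinants"
begin


type_synonym 'n ex = "('n \<Rightarrow> nat) \<times> ('n \<Rightarrow> nat)"

lemma fin_le_fun: "finite {y::'n::finite \<Rightarrow> nat. y \<le> a}"
proof -
  have "{y::'n \<Rightarrow> nat. y \<le> a} \<subseteq> PiE UNIV (\<lambda>i. {..a i})"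
    by (auto simp: le_fun_def PiE_def extensional_def)
  moreover have "finite (PiE (UNIV::'n set) (\<lambda>i. {..a i}))" by (rule finite_PiE) auto
  ultimately show ?thesis using finite_subset by blast
qed

lemma fin_le: "finite {x::'n::finite ex. x \<le> e}"
proof -
  have "{x::'n ex. x \<le> e} = {y. y \<le> fst e} \<times> {y. y \<le> snd e}"
    by (auto simp: less_eq_prod_def)
  then show ?thesis using finite_cartesian_product[OF fin_le_fun fin_le_fun] by metis
qed

lemma ex_add_diff: "(x::'n ex) \<le> e \<Longrightarrow> x + (e - x) = e"
  by (auto simp: less_eq_prod_def le_fun_def prod_eq_iff fun_eq_iff)
lemma ex_diff_add: "(x::'n ex) \<le> e \<Longrightarrow> (e - x) + x = e"
  by (auto simp: less_eq_prod_def le_fun_def prod_eq_iff fun_eq_iff)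
lemma ex_diff_le: "(e::'n ex) - x \<le> e"
  by (auto simp: less_eq_prod_def le_fun_def)
lemma ex_diff_diff: "(x::'n ex) \<le> e \<Longrightarrow> e - (e - x) = x"
  by (auto simp: less_eq_prod_def le_fun_def prod_eq_iff fun_eq_iff)
lemma ex_add_sub: "((x::'n ex) + z) - x = z"
  by (auto simp: prod_eq_iff fun_eq_iff)
lemma ex_sub_sub: "(e::'n ex) - (x + z) = e - x - z"
  by (auto simp: prod_eq_iff fun_eq_iff)
lemma ex_le_add: "(x::'n ex) \<le> x + z"
  by (auto simp: less_eq_prod_def le_fun_def)
lemma fun_add_le_iff: "(x::'a \<Rightarrow> nat) \<le> e \<Longrightarrow> (x + z \<le> e) = (z \<le> e - x)"
  by (force simp: le_fun_def le_diff_conv2 add.commute)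
lemma ex_add_le_iff: "(x::'n ex) \<le> e \<Longrightarrow> (x + z \<le> e) = (z \<le> e - x)"
  using fun_add_le_iff[of "fst x" "fst e" "fst z"] fun_add_le_iff[of "snd x" "snd e" "snd z"]
  by (auto simp: less_eq_prod_def)
lemma ex_le_diff_add: "(x::'n ex) \<le> s \<Longrightarrow> s = x + (s - x)"
  by (auto simp: less_eq_prod_def le_fun_def prod_eq_iff fun_eq_iff)
lemma ex_zero_le: "(0::'n ex) \<le> e"
  by (auto simp: less_eq_prod_def le_fun_def)
lemma ex_le_zero: "(e::'n ex) \<le> 0 \<longleftrightarrow> e = 0"
  by (auto simp: less_eq_prod_def le_fun_def prod_eq_iff fun_eq_iff)
lemma ex_diff_zero: "(e::'n ex) - 0 = e"
  by (auto simp: prod_eq_iff fun_eq_iff)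
lemma ex_diff_mono: "(x::'n ex) \<le> s \<Longrightarrow> s \<le> e \<Longrightarrow> s - x \<le> e - x"
  by (auto simp: less_eq_prod_def le_fun_def intro: diff_le_mono)
lemma ex_diff_swap: "(x::'n ex) \<le> s \<Longrightarrow> s \<le> e \<Longrightarrow> e - s = e - x - (s - x)"
  by (auto simp: less_eq_prod_def le_fun_def prod_eq_iff fun_eq_iff)

typedef 'n ps = "UNIV :: ('n ex \<Rightarrow> complex) set" morphisms coef Abs_ps by auto

lemma coef_inject': "(f = g) = (\<forall>x. coef f x = coef g x)"
  by (metis coef_inject ext)

lemma ps_eqI: "(\<And>x. coef f x = coef g x) \<Longrightarrow> f = g"
  using coef_inject' by blast

lemma coef_Abs[simp]: "coef (Abs_ps h) = h"
  by (simp add: Abs_ps_inverse)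

instantiation ps :: (finite) comm_ring_1
begin
definition "0 = Abs_ps (\<lambda>_. 0)"
definition "1 = Abs_ps (\<lambda>x. if x = 0 then 1 else 0)"
definition "f + g = Abs_ps (\<lambda>x. coef f x + coef g x)"
definition "f - g = Abs_ps (\<lambda>x. coef f x - coef g x)"
definition "- f = Abs_ps (\<lambda>x. - coef f x)"
definition "f * g = Abs_ps (\<lambda>e. \<Sum>x\<in>{x. x \<le> e}. coef f x * coef g (e - x))"

lemma coef_0[simp]: "coef 0 x = 0" by (simp add: zero_ps_def)
lemma coef_1: "coef 1 x = (if x = 0 then 1 else 0)" by (simp add: one_ps_def)
lemma coef_add[simp]: "coef (f + g) x = coef f x + coef g x" by (simp add: plus_ps_def)
lemma coef_diff[simp]: "coef (f - g) x = coef f x - coef g x" by (simp add: minus_ps_def)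
lemma coef_uminus[simp]: "coef (- f) x = - coef f x" by (simp add: uminus_ps_def)
lemma coef_mult: "coef (f * g) e = (\<Sum>x\<in>{x. x \<le> e}. coef f x * coef g (e - x))" by (simp add: times_ps_def)

lemma mult_comm_aux: "coef ((f::'a ps) * g) e = coef (g * f) e"
proof -
  have "coef (f * g) e = (\<Sum>x\<in>{x. x \<le> e}. coef f (e - x) * coef g (e - (e - x)))"
    unfolding coef_mult
    by (rule sum.reindex_bij_witness[where i="\<lambda>x. e - x" and j="\<lambda>x. e - x"])
       (auto simp: ex_diff_diff ex_diff_le)
  also have "\<dots> = coef (g * f) e" unfolding coef_mult
    by (rule sum.cong) (auto simp: ex_diff_diff mult.commute)
  finally show ?thesis .
qed

lemma mult_assoc_aux: "coef ((f::'a ps) * g * h) e = coef (f * (g * h)) e"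
proof -
  have "coef (f * g * h) e = (\<Sum>s\<in>{s. s \<le> e}. \<Sum>x\<in>{x. x \<le> s}. coef f x * coef g (s - x) * coef h (e - s))"
    by (simp add: coef_mult sum_distrib_right)
  also have "\<dots> = (\<Sum>s\<in>{s. s \<le> e}. \<Sum>x\<in>{x. x \<le> e \<and> x \<le> s}. coef f x * coef g (s - x) * coef h (e - s))"
    by (rule sum.cong) (auto intro!: sum.cong dest: order_trans)
  also have "\<dots> = (\<Sum>x\<in>{x. x \<le> e}. \<Sum>s\<in>{s. s \<le> e \<and> x \<le> s}. coef f x * coef g (s - x) * coef h (e - s))"
    using sum.swap_restrict[of "{s. s \<le> e}" "{x. x \<le> e}" "\<lambda>s x. coef f x * coef g (s - x) * coef h (e - s)" "\<lambda>s x. x \<le> s"]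
    by (simp add: fin_le)
  also have "\<dots> = (\<Sum>x\<in>{x. x \<le> e}. \<Sum>z\<in>{z. z \<le> e - x}. coef f x * coef g z * coef h (e - x - z))"
  proof (rule sum.cong[OF refl])
    fix x assume x: "x \<in> {x. x \<le> e}"
    show "(\<Sum>s\<in>{s. s \<le> e \<and> x \<le> s}. coef f x * coef g (s - x) * coef h (e - s)) =
          (\<Sum>z\<in>{z. z \<le> e - x}. coef f x * coef g z * coef h (e - x - z))"
      by (rule sum.reindex_bij_witness[where i="\<lambda>z. x + z" and j="\<lambda>s. s - x"])
         (use x in \<open>auto simp: ex_add_sub ex_sub_sub ex_le_add ex_add_le_iff ex_diff_mono ex_diff_swap[symmetric]
               intro: ex_le_diff_add[symmetric]\<close>)
  qed
  also have "\<dots> = coef (f * (g * h)) e"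
    by (simp add: coef_mult sum_distrib_left mult.assoc)
  finally show ?thesis .
qed

instance
proof
  fix a b c :: "'a ps"
  show "a * b * c = a * (b * c)" by (rule ps_eqI, rule mult_assoc_aux)
  show "a * b = b * a" by (rule ps_eqI, rule mult_comm_aux)
  show "1 * a = a"
  proof (rule ps_eqI)
    fix e
    have "coef (1 * a) e = (\<Sum>x\<in>{x. x \<le> e}. (if x = 0 then coef a e else 0))"
      by (auto simp: coef_mult coef_1 ex_diff_zero intro!: sum.cong)
    also have "\<dots> = coef a e" by (simp add: fin_le ex_zero_le)
    finally show "coef (1 * a) e = coef a e" .
  qed
  show "(a + b) * c = a * c + b * c"
    by (rule ps_eqI) (simp add: coef_mult distrib_right sum.distrib)
  show "a + b + c = a + (b + c)" by (rule ps_eqI) simp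
  show "a + b = b + a" by (rule ps_eqI) simp
  show "0 + a = a" by (rule ps_eqI) simp
  show "- a + a = 0" by (rule ps_eqI) simp
  show "a - b = a + - b" by (rule ps_eqI) simp
  show "(0::'a ps) \<noteq> 1"
  proof
    assume "(0::'a ps) = 1"
    then have "coef (0::'a ps) 0 = coef 1 0" by simp
    then show False by (simp add: coef_1)
  qed
qed
end




lemma coef_sum: "coef (\<Sum>i\<in>S. F i) x = (\<Sum>i\<in>S. coef (F i) x)"
  by (induction S rule: infinite_finite_induct) auto

lemma coef_of_nat_mult: "coef (of_nat n * (f::'n::finite ps)) x = of_nat n * coef f x"
  by (induction n) (auto simp: distrib_right)

lemma coef_of_int_mult: "coef (of_int n * (f::'n::finite ps)) x = of_int n * coef f x"
proof (cases "n \<ge> 0")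
  case True
  then obtain m where "n = int m" by (metis nonneg_eq_int)
  then show ?thesis by (simp add: coef_of_nat_mult)
next
  case False
  then obtain m where "n = - int m" by (metis nonneg_eq_int neg_0_le_iff_le le_minus_iff minus_minus linorder_le_cases)
  then show ?thesis by (simp add: coef_of_nat_mult)
qed

lemma mdeg_add: "mdeg ((a::'n::finite \<Rightarrow> nat) + b) = mdeg a + mdeg b"
  by (simp add: mdeg_def sum.distrib)

lemma mdeg_diff: "(x::'n::finite \<Rightarrow> nat) \<le> a \<Longrightarrow> mdeg x + mdeg (a - x) = mdeg a"
proof -
  assume "x \<le> a"
  then have "x + (a - x) = a" by (auto simp: le_fun_def fun_eq_iff)
  then show ?thesis by (metis mdeg_add)
qed

lemma mdeg_zero[simp]: "mdeg (0::'n::finite \<Rightarrow> nat) = 0"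
  by (simp add: mdeg_def)

lemma mdeg_zero_iff: "mdeg (a::'n::finite \<Rightarrow> nat) = 0 \<longleftrightarrow> a = 0"
  by (auto simp: mdeg_def fun_eq_iff)

lemma mdeg_le: "(x::'n::finite \<Rightarrow> nat) \<le> a \<Longrightarrow> mdeg x \<le> mdeg a"
  using mdeg_diff by (metis le_add1)

definition uv :: "'n::finite ps \<Rightarrow> nat \<Rightarrow> bool" where
  "uv f m \<longleftrightarrow> (\<forall>(a::'n \<Rightarrow> nat) b. mdeg a < m \<longrightarrow> coef f (a, b) = 0)"

lemma uv_0[simp]: "uv f 0" by (simp add: uv_def)
lemma uv_zero[simp]: "uv 0 m" by (simp add: uv_def)

lemma uv_mono: "uv f m \<Longrightarrow> k \<le> m \<Longrightarrow> uv f k"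
  by (auto simp: uv_def)

lemma uv_add: "uv f m \<Longrightarrow> uv g m \<Longrightarrow> uv (f + g) m"
  by (auto simp: uv_def)

lemma uv_sum: "(\<And>i. i \<in> S \<Longrightarrow> uv (F i) m) \<Longrightarrow> uv (\<Sum>i\<in>S. F i) m"
  by (induction S rule: infinite_finite_induct) (auto intro: uv_add)

lemma uv_mult:
  fixes f g :: "'n::finite ps"
  shows "uv f m \<Longrightarrow> uv g n \<Longrightarrow> uv (f * g) (m + n)"
  unfolding uv_def
proof (intro allI impI)
  fix a :: "'n \<Rightarrow> nat" and b :: "'n \<Rightarrow> nat" assume f: "\<forall>a b. mdeg a < m \<longrightarrow> coef f (a, b) = 0"
    and g: "\<forall>a b. mdeg a < n \<longrightarrow> coef g (a, b) = 0" and d: "mdeg a < m + n"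
  show "coef (f * g) (a, b) = 0"
    unfolding coef_mult
  proof (rule sum.neutral, intro ballI)
    fix x assume "x \<in> {x. x \<le> (a, b)}"
    then have "fst x \<le> a" by (auto simp: less_eq_prod_def)
    then have "mdeg (fst x) + mdeg (a - fst x) = mdeg a" by (rule mdeg_diff)
    then have "mdeg (fst x) < m \<or> mdeg (a - fst x) < n" using d by linarith
    then show "coef f x * coef g ((a, b) - x) = 0"
      using f g by (cases x) auto
  qed
qed

lemma uv_mult_left: "uv g n \<Longrightarrow> uv (f * g) n"
  using uv_mult[of f 0 g n] by simp

lemma uv_mult_right: "uv f n \<Longrightarrow> uv (f * g) n"
  using uv_mult[of f n g 0] by simp

lemma uv_prod: "finite S \<Longrightarrow> (\<And>i. i \<in> S \<Longrightarrow> uv (F i) (m i)) \<Longrightarrow> uv (\<Prod>i\<in>S. F i) (\<Sum>i\<in>S. m i)"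
  by (induction S rule: finite_induct) (auto intro: uv_mult)

lemma uv_power: "uv f m \<Longrightarrow> uv (f ^ k) (k * m)"
  by (induction k) (auto intro: uv_mult)

lemma uv_of_int_mult: "uv f m \<Longrightarrow> uv (of_int c * f) m"
  by (rule uv_mult_left)

definition dps :: "'n \<Rightarrow> 'n::finite ps \<Rightarrow> 'n ps" where
  "dps j f = Abs_ps (\<lambda>(a, b). of_nat (a j + 1) * coef f (a(j := a j + 1), b))"

definition dl :: "'n \<Rightarrow> 'n ex" where
  "dl j = ((\<lambda>i. if i = j then 1 else 0), 0)"

lemma coef_dps: "coef (dps j f) e = of_nat (fst e j + 1) * coef f (e + dl j)"
proof -
  have "(fst e)(j := fst e j + 1) = fst e + fst (dl j)"
    by (auto simp: dl_def fun_eq_iff)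
  then show ?thesis by (cases e) (simp add: dps_def dl_def)
qed

lemma dps_add: "dps j (f + g) = dps j f + dps j g"
  by (rule ps_eqI) (simp add: coef_dps distrib_left)

lemma dps_diff: "dps j (f - g) = dps j f - dps j g"
  by (rule ps_eqI) (simp add: coef_dps right_diff_distrib)

lemma dps_zero[simp]: "dps j 0 = 0"
  by (rule ps_eqI) (simp add: coef_dps)

lemma dps_sum: "dps j (\<Sum>i\<in>S. F i) = (\<Sum>i\<in>S. dps j (F i))"
  by (induction S rule: infinite_finite_induct) (auto simp: dps_add)

lemma dps_mult: "dps j (f * g) = dps j f * g + f * dps j g"
proof (rule ps_eqI)
  fix e :: "'a ex"
  let ?d = "dl j"
  let ?E = "e + ?d"
  have L: "coef (dps j (f * g)) e = (\<Sum>y\<in>{y. y \<le> ?E}. (of_nat (fst e j + 1)) * (coef f y * coef g (?E - y)))"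
    by (simp add: coef_dps coef_mult sum_distrib_left)
  have R1: "coef (dps j f * g) e = (\<Sum>y\<in>{y. y \<le> ?E}. of_nat (fst y j) * (coef f y * coef g (?E - y)))"
  proof -
    have "coef (dps j f * g) e = (\<Sum>x\<in>{x. x \<le> e}. of_nat (fst (x + ?d) j) * (coef f (x + ?d) * coef g (?E - (x + ?d))))"
      unfolding coef_mult coef_dps
      by (rule sum.cong) (auto simp: dl_def prod_eq_iff fun_eq_iff)
    also have "\<dots> = (\<Sum>y\<in>{y. y \<le> ?E \<and> fst y j \<ge> 1}. of_nat (fst y j) * (coef f y * coef g (?E - y)))"
      by (rule sum.reindex_bij_witness[where i="\<lambda>y. y - ?d" and j="\<lambda>x. x + ?d"])
         (auto simp: dl_def prod_eq_iff fun_eq_iff less_eq_prod_def le_fun_def split: if_splits)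
    also have "\<dots> = (\<Sum>y\<in>{y. y \<le> ?E}. of_nat (fst y j) * (coef f y * coef g (?E - y)))"
      by (rule sum.mono_neutral_left) (auto simp: fin_le)
    finally show ?thesis .
  qed
  have R2: "coef (f * dps j g) e = (\<Sum>y\<in>{y. y \<le> ?E}. of_nat (fst (?E - y) j) * (coef f y * coef g (?E - y)))"
  proof -
    have "coef (f * dps j g) e = (\<Sum>y\<in>{y. y \<le> e}. of_nat (fst (?E - y) j) * (coef f y * coef g (?E - y)))"
      unfolding coef_mult coef_dps
    proof (rule sum.cong[OF refl])
      fix y assume "y \<in> {y. y \<le> e}"
      then have h1: "e - y + dl j = e + dl j - y" and h2: "fst (e - y) j + 1 = fst (e + dl j - y) j"
        by (auto simp: dl_def less_eq_prod_def le_fun_def prod_eq_iff fun_eq_iff Suc_diff_le)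
      show "coef f y * (of_nat (fst (e - y) j + 1) * coef g (e - y + dl j)) =
            of_nat (fst (?E - y) j) * (coef f y * coef g (?E - y))"
        unfolding h1 h2 by simp
    qed
    also have "\<dots> = (\<Sum>y\<in>{y. y \<le> ?E}. of_nat (fst (?E - y) j) * (coef f y * coef g (?E - y)))"
    proof (rule sum.mono_neutral_left)
      show "finite {y. y \<le> ?E}" by (rule fin_le)
      show "{y. y \<le> e} \<subseteq> {y. y \<le> ?E}"
        by (auto simp: dl_def less_eq_prod_def le_fun_def intro: le_SucI)
      show "\<forall>i\<in>{y. y \<le> ?E} - {y. y \<le> e}. of_nat (fst (?E - i) j) * (coef f i * coef g (?E - i)) = 0"
      proof
        fix y assume y: "y \<in> {y. y \<le> ?E} - {y. y \<le> e}"
        have a: "\<forall>i. fst y i \<le> fst e i + (if i = j then 1 else 0)" and b: "snd y \<le> snd e"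
          using y by (auto simp: dl_def less_eq_prod_def le_fun_def)
        obtain i where i: "\<not> fst y i \<le> fst e i"
          using y b by (auto simp: less_eq_prod_def le_fun_def)
        then have ij: "i = j" using a[rule_format, of i] by (cases "i = j") auto
        have "fst y j \<le> fst e j + 1" using a[rule_format, of j] by simp
        then have "fst y j = fst e j + 1" using i ij by simp
        then show "of_nat (fst (?E - y) j) * (coef f y * coef g (?E - y)) = 0"
          by (simp add: dl_def)
      qed
    qed
    finally show ?thesis .
  qed
  have "\<And>y. y \<le> ?E \<Longrightarrow> fst y j + fst (?E - y) j = fst e j + 1"
  proof -
    fix y assume "y \<le> ?E"
    then have "fst y j \<le> fst e j + 1" by (auto simp: dl_def less_eq_prod_def le_fun_def dest: spec[of _ j])
    then show "fst y j + fst (?E - y) j = fst e j + 1" by (simp add: dl_def)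
  qed
  note H = this
  have "coef (dps j (f * g)) e = coef (dps j f * g) e + coef (f * dps j g) e"
    unfolding L R1 R2 sum.distrib[symmetric]
  proof (intro sum.cong refl)
    fix y assume "y \<in> {y. y \<le> ?E}"
    then have h: "of_nat (fst y j) + of_nat (fst (?E - y) j) = (of_nat (fst e j + 1) :: complex)"
      using H by (metis of_nat_add mem_Collect_eq)
    show "of_nat (fst e j + 1) * (coef f y * coef g (?E - y)) =
      of_nat (fst y j) * (coef f y * coef g (?E - y)) + of_nat (fst (?E - y) j) * (coef f y * coef g (?E - y))"
      by (metis distrib_right h)
  qed
  then show "coef (dps j (f * g)) e = coef (dps j f * g + f * dps j g) e" by simp
qed




lemma dl_ne: "fst (x + dl j) \<noteq> 0"
proof
  assume "fst (x + dl j) = 0"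
  then have "fst (x + dl j) j = 0" by simp
  then show False by (simp add: dl_def)
qed

lemma fst_dl_ne[simp]: "fst (dl j) \<noteq> 0"
  using dl_ne[of 0 j] by simp

lemma dl_ne': "x + dl j \<noteq> 0"
  by (metis dl_ne fst_zero)

lemma fun_minus_zero[simp]: "(a::'a\<Rightarrow>nat) - (\<lambda>x. 0) = a"
  by (simp add: fun_eq_iff)

lemma dps_one[simp]: "dps j 1 = 0"
  by (rule ps_eqI) (simp add: coef_dps coef_1 dl_ne')

lemma dps_prod: "finite S \<Longrightarrow> dps j (\<Prod>i\<in>S. F i) = (\<Sum>i\<in>S. dps j (F i) * (\<Prod>k\<in>S - {i}. F k))"
proof (induction S rule: finite_induct)
  case empty
  then show ?case by simp
next
  case (insert x S)
  have eq: "\<And>i. i \<in> S \<Longrightarrow> insert x S - {i} = insert x (S - {i})" using insert by auto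
  have "dps j (\<Prod>i\<in>insert x S. F i) = dps j (F x) * (\<Prod>i\<in>S. F i) + F x * dps j (\<Prod>i\<in>S. F i)"
    using insert by (simp add: dps_mult)
  also have "\<dots> = dps j (F x) * (\<Prod>i\<in>S. F i) + (\<Sum>i\<in>S. dps j (F i) * (\<Prod>k\<in>insert x S - {i}. F k))"
    using insert by (simp add: sum_distrib_left eq mult_ac)
  also have "\<dots> = (\<Sum>i\<in>insert x S. dps j (F i) * (\<Prod>k\<in>insert x S - {i}. F k))"
    using insert by (simp add: insert_Diff_if)
  finally show ?case .
qed

lemma dps_power: "dps j (f ^ n) = of_nat n * f ^ (n - 1) * dps j f"
proof (induction n)
  case 0
  then show ?case by simp
next
  case (Suc n)
  show ?case
  proof (cases n)
    case 0 then show ?thesis by (simp add: dps_mult)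
  next
    case (Suc m)
    then show ?thesis using Suc.IH by (simp add: dps_mult algebra_simps)
  qed
qed

definition vc :: "(('n::finite \<Rightarrow> nat) \<Rightarrow> complex) \<Rightarrow> 'n ps" where
  "vc h = Abs_ps (\<lambda>(a, b). if a = 0 then h b else 0)"

lemma coef_vc: "coef (vc h) (a, b) = (if a = 0 then h b else 0)"
  by (simp add: vc_def)

lemma coef_vc': "coef (vc h) x = (if fst x = 0 then h (snd x) else 0)"
  by (cases x) (simp add: coef_vc)

lemma dps_vc[simp]: "dps j (vc h) = 0"
  by (rule ps_eqI) (simp add: coef_dps coef_vc' dl_ne)

lemma vc_scale: "vc (\<lambda>b. of_nat n * h b) = of_nat n * vc h"
  by (rule ps_eqI) (auto simp: coef_of_nat_mult vc_def split: prod.splits)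

lemma coef_vc_mult: "coef (vc h * M) (a, b) = (\<Sum>b'\<in>{b'. b' \<le> b}. h b' * coef M (a, b - b'))"
proof -
  have "coef (vc h * M) (a, b) = (\<Sum>x\<in>(\<lambda>b'. (0, b')) ` {b'. b' \<le> b}. coef (vc h) x * coef M ((a, b) - x))"
    unfolding coef_mult
    by (rule sum.mono_neutral_right[OF fin_le])
       (auto simp: less_eq_prod_def le_fun_def coef_vc zero_fun_def)
  also have "\<dots> = (\<Sum>b'\<in>{b'. b' \<le> b}. h b' * coef M (a, b - b'))"
    by (subst sum.reindex) (auto simp: inj_on_def coef_vc zero_fun_def fun_eq_iff)
  finally show ?thesis .
qed

definition mon :: "('n \<Rightarrow> 'n::finite ps) \<Rightarrow> ('n \<Rightarrow> nat) \<Rightarrow> 'n ps" where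
  "mon A \<alpha> = (\<Prod>i\<in>UNIV. A i ^ \<alpha> i)"

lemma mon_rem: "mon A \<beta> = A i ^ \<beta> i * (\<Prod>k\<in>UNIV - {i}. A k ^ \<beta> k)"
  unfolding mon_def by (rule prod.remove) auto

lemma mon_upd: "mon A (\<alpha>(i := x)) = A i ^ x * (\<Prod>k\<in>UNIV - {i}. A k ^ \<alpha> k)"
proof -
  have "(\<Prod>k\<in>UNIV - {i}. A k ^ (\<alpha>(i := x)) k) = (\<Prod>k\<in>UNIV - {i}. A k ^ \<alpha> k)"
    by (rule prod.cong) auto
  then show ?thesis unfolding mon_rem[of A "\<alpha>(i := x)" i] by simp
qed

lemma mon_remove: "\<alpha> i \<ge> 1 \<Longrightarrow> mon A \<alpha> = A i * mon A (\<alpha>(i := \<alpha> i - 1))"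
proof -
  assume a: "\<alpha> i \<ge> 1"
  have "mon A \<alpha> = A i ^ \<alpha> i * (\<Prod>k\<in>UNIV - {i}. A k ^ \<alpha> k)"
    by (rule mon_rem)
  moreover have "mon A (\<alpha>(i := \<alpha> i - 1)) = A i ^ (\<alpha> i - 1) * (\<Prod>k\<in>UNIV - {i}. A k ^ \<alpha> k)"
    by (rule mon_upd)
  moreover have "A i ^ \<alpha> i = A i * A i ^ (\<alpha> i - 1)" using a
    by (metis One_nat_def Suc_diff_le diff_Suc_1 power_Suc)
  ultimately show ?thesis by (simp add: mult.assoc)
qed

lemma dps_mon: "dps j (mon A \<alpha>) = (\<Sum>i\<in>UNIV. of_nat (\<alpha> i) * mon A (\<alpha>(i := \<alpha> i - 1)) * dps j (A i))"
proof -
  have "dps j (mon A \<alpha>) = (\<Sum>i\<in>UNIV. dps j (A i ^ \<alpha> i) * (\<Prod>k\<in>UNIV - {i}. A k ^ \<alpha> k))"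
    unfolding mon_def by (simp add: dps_prod)
  also have "\<dots> = (\<Sum>i\<in>UNIV. of_nat (\<alpha> i) * mon A (\<alpha>(i := \<alpha> i - 1)) * dps j (A i))"
  proof (rule sum.cong[OF refl])
    fix i
    have "mon A (\<alpha>(i := \<alpha> i - 1)) = A i ^ (\<alpha> i - 1) * (\<Prod>k\<in>UNIV - {i}. A k ^ \<alpha> k)"
      by (rule mon_upd)
    then show "dps j (A i ^ \<alpha> i) * (\<Prod>k\<in>UNIV - {i}. A k ^ \<alpha> k) =
          of_nat (\<alpha> i) * mon A (\<alpha>(i := \<alpha> i - 1)) * dps j (A i)"
      by (simp add: dps_power mult_ac)
  qed
  finally show ?thesis .
qed

definition Dn :: "nat \<Rightarrow> ('n::finite \<Rightarrow> nat) set" where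
  "Dn N = {\<alpha>. mdeg \<alpha> \<le> N}"

lemma finite_Dn: "finite (Dn N :: ('n::finite \<Rightarrow> nat) set)"
proof -
  have "(Dn N :: ('n \<Rightarrow> nat) set) \<subseteq> {y. y \<le> (\<lambda>_. N)}"
  proof
    fix \<alpha> :: "'n \<Rightarrow> nat" assume a: "\<alpha> \<in> Dn N"
    have "\<alpha> i \<le> N" for i
    proof -
      have "\<alpha> i \<le> mdeg \<alpha>" unfolding mdeg_def by (rule member_le_sum) auto
      then show ?thesis using a by (simp add: Dn_def)
    qed
    then show "\<alpha> \<in> {y. y \<le> (\<lambda>_. N)}" by (simp add: le_fun_def)
  qed
  then show ?thesis using fin_le_fun finite_subset by blast
qed

definition P :: "('n \<Rightarrow> 'n::finite ps) \<Rightarrow> 'n fps2 \<Rightarrow> nat \<Rightarrow> 'n ps" where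
  "P A \<psi> N = (\<Sum>\<alpha>\<in>Dn N. vc (\<psi> \<alpha>) * mon A \<alpha>)"

definition dt :: "'n fps2 \<Rightarrow> 'n \<Rightarrow> 'n::finite fps2" where
  "dt \<psi> i \<alpha> \<beta> = of_nat (\<alpha> i + 1) * \<psi> (\<alpha>(i := \<alpha> i + 1)) \<beta>"

lemma mdeg_upd: "mdeg (\<alpha>(i := (x::nat))) + \<alpha> i = mdeg \<alpha> + x"
proof -
  have "mdeg \<alpha> = \<alpha> i + (\<Sum>k\<in>UNIV - {i}. \<alpha> k)" unfolding mdeg_def by (rule sum.remove) auto
  moreover have "mdeg (\<alpha>(i := x)) = x + (\<Sum>k\<in>UNIV - {i}. \<alpha> k)"
  proof -
    have "mdeg (\<alpha>(i := x)) = (\<alpha>(i := x)) i + (\<Sum>k\<in>UNIV - {i}. (\<alpha>(i := x)) k)"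
      unfolding mdeg_def by (rule sum.remove) auto
    also have "\<dots> = x + (\<Sum>k\<in>UNIV - {i}. \<alpha> k)"
    proof -
      have "(\<Sum>k\<in>UNIV - {i}. (\<alpha>(i := x)) k) = (\<Sum>k\<in>UNIV - {i}. \<alpha> k)" by (rule sum.cong) auto
      then show ?thesis by simp
    qed
    finally show ?thesis .
  qed
  ultimately show ?thesis by simp
qed

lemma chain:
  fixes A :: "'n::finite \<Rightarrow> 'n ps" and \<psi> :: "'n fps2"
  shows "N \<ge> 1 \<Longrightarrow> dps j (P A \<psi> N) = (\<Sum>i\<in>UNIV. P A (dt \<psi> i) (N - 1) * dps j (A i))"
proof -
  assume N: "N \<ge> 1"
  have "dps j (P A \<psi> N) = (\<Sum>\<alpha>\<in>Dn N. vc (\<psi> \<alpha>) * (\<Sum>i\<in>UNIV. of_nat (\<alpha> i) * mon A (\<alpha>(i := \<alpha> i - 1)) * dps j (A i)))"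
    unfolding P_def by (simp add: dps_sum dps_mult dps_mon)
  also have "\<dots> = (\<Sum>i\<in>UNIV. (\<Sum>\<alpha>\<in>Dn N. vc (\<psi> \<alpha>) * of_nat (\<alpha> i) * mon A (\<alpha>(i := \<alpha> i - 1))) * dps j (A i))"
    by (simp add: sum_distrib_left sum_distrib_right mult_ac sum.swap[of _ "Dn N"])
  also have "\<dots> = (\<Sum>i\<in>UNIV. P A (dt \<psi> i) (N - 1) * dps j (A i))"
  proof (rule sum.cong[OF refl])
    fix i
    have "(\<Sum>\<alpha>\<in>Dn N. vc (\<psi> \<alpha>) * of_nat (\<alpha> i) * mon A (\<alpha>(i := \<alpha> i - 1))) =
          (\<Sum>\<alpha>\<in>{\<alpha>\<in>Dn N. \<alpha> i \<ge> 1}. vc (\<psi> \<alpha>) * of_nat (\<alpha> i) * mon A (\<alpha>(i := \<alpha> i - 1)))"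
    proof (rule sum.mono_neutral_right)
      show "finite (Dn N)" by (rule finite_Dn)
      show "\<forall>\<alpha>\<in>Dn N - {\<alpha> \<in> Dn N. 1 \<le> \<alpha> i}. vc (\<psi> \<alpha>) * of_nat (\<alpha> i) * mon A (\<alpha>(i := \<alpha> i - 1)) = 0"
      proof
        fix \<alpha> :: "'n \<Rightarrow> nat" assume "\<alpha> \<in> Dn N - {\<alpha> \<in> Dn N. 1 \<le> \<alpha> i}"
        then have "\<alpha> i = 0" by auto
        then show "vc (\<psi> \<alpha>) * of_nat (\<alpha> i) * mon A (\<alpha>(i := \<alpha> i - 1)) = 0" by simp
      qed
    qed auto
    also have "\<dots> = (\<Sum>\<alpha>\<in>Dn (N - 1). vc (dt \<psi> i \<alpha>) * mon A \<alpha>)"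
    proof (rule sum.reindex_bij_witness[where i="\<lambda>\<alpha>. \<alpha>(i := \<alpha> i + 1)" and j="\<lambda>\<alpha>. \<alpha>(i := \<alpha> i - 1)"])
      fix \<alpha> :: "'n \<Rightarrow> nat" assume "\<alpha> \<in> Dn (N - 1)"
      then show "\<alpha>(i := \<alpha> i + 1) \<in> {\<alpha> \<in> Dn N. 1 \<le> \<alpha> i}"
        using mdeg_upd[of \<alpha> i "\<alpha> i + 1"] N by (simp add: Dn_def)
      show "(\<alpha>(i := \<alpha> i + 1))(i := (\<alpha>(i := \<alpha> i + 1)) i - 1) = \<alpha>" by simp
    next
      fix \<alpha> :: "'n \<Rightarrow> nat" assume a: "\<alpha> \<in> {\<alpha> \<in> Dn N. 1 \<le> \<alpha> i}"
      then show "\<alpha>(i := \<alpha> i - 1) \<in> Dn (N - 1)"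
        using mdeg_upd[of \<alpha> i "\<alpha> i - 1"] by (simp add: Dn_def, linarith)
      show "(\<alpha>(i := \<alpha> i - 1))(i := (\<alpha>(i := \<alpha> i - 1)) i + 1) = \<alpha>" using a by auto
      let ?b = "\<alpha>(i := \<alpha> i - 1)"
      have b: "?b(i := ?b i + 1) = \<alpha>" "?b i + 1 = \<alpha> i" using a by auto
      have "vc (dt \<psi> i ?b) = of_nat (?b i + 1) * vc (\<psi> (?b(i := ?b i + 1)))"
        unfolding dt_def[abs_def] by (rule vc_scale)
      then show "vc (dt \<psi> i ?b) * mon A ?b = vc (\<psi> \<alpha>) * of_nat (\<alpha> i) * mon A (\<alpha>(i := \<alpha> i - 1))"
        unfolding b by (simp add: mult_ac)
    qed
    finally show "(\<Sum>\<alpha>\<in>Dn N. vc (\<psi> \<alpha>) * of_nat (\<alpha> i) * mon A (\<alpha>(i := \<alpha> i - 1))) * dps j (A i) =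
       P A (dt \<psi> i) (N - 1) * dps j (A i)" unfolding P_def by simp
  qed
  finally show ?thesis .
qed




definition ee :: "'n::finite \<Rightarrow> nat" where
  "ee = (SOME e. inj e)"

lemma inj_ee: "inj (ee :: 'n::finite \<Rightarrow> nat)"
proof -
  obtain f :: "'n \<Rightarrow> nat" and n where "f ` UNIV = {i. i < n} \<and> inj_on f UNIV"
    using finite_imp_inj_to_nat_seg[of "UNIV :: 'n set"] by auto
  then have "\<exists>e :: 'n \<Rightarrow> nat. inj e" by blast
  then show ?thesis unfolding ee_def by (rule someI_ex)
qed

definition lexf :: "('n::finite \<Rightarrow> nat) \<Rightarrow> ('n \<Rightarrow> nat) \<Rightarrow> bool" where
  "lexf x y \<longleftrightarrow> (\<exists>i. x i < y i \<and> (\<forall>j. ee j < ee i \<longrightarrow> x j = y j))"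

lemma lexf_irrefl: "\<not> lexf x x"
  by (auto simp: lexf_def)

lemma lexf_trans:
  fixes x y z :: "'n::finite \<Rightarrow> nat"
  shows "lexf x y \<Longrightarrow> lexf y z \<Longrightarrow> lexf x z"
proof -
  assume "lexf x y" "lexf y z"
  then obtain i k where i: "x i < y i" "\<forall>j. ee j < ee i \<longrightarrow> x j = y j"
    and k: "y k < z k" "\<forall>j. ee j < ee k \<longrightarrow> y j = z j" by (auto simp: lexf_def)
  consider "ee i < ee k" | "ee k < ee i" | "ee i = ee k" by linarith
  then show "lexf x z"
  proof cases
    case 1 then show ?thesis using i k unfolding lexf_def
      by (intro exI[of _ i]) auto
  next
    case 2 then show ?thesis using i k unfolding lexf_def
      by (intro exI[of _ k]) auto
  next
    case 3 then have "i = k" using inj_ee by (metis injD)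
    then show ?thesis using i k unfolding lexf_def
      by (intro exI[of _ k]) auto
  qed
qed

lemma lexf_total:
  fixes x y :: "'n::finite \<Rightarrow> nat"
  shows "x \<noteq> y \<Longrightarrow> lexf x y \<or> lexf y x"
proof -
  assume "x \<noteq> y"
  then obtain i0 where "x i0 \<noteq> y i0" by auto
  define m where "m = (LEAST v. \<exists>i. ee i = v \<and> x i \<noteq> y i)"
  have "\<exists>i. ee i = m \<and> x i \<noteq> y i"
    unfolding m_def by (rule LeastI[of _ "ee i0"]) (use \<open>x i0 \<noteq> y i0\<close> in auto)
  then obtain i where i: "ee i = m" "x i \<noteq> y i" by auto
  have min: "\<forall>j. ee j < ee i \<longrightarrow> x j = y j"
  proof (intro allI impI)
    fix j :: 'n assume "ee j < ee i"
    show "x j = y j"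
    proof (rule ccontr)
      assume "x j \<noteq> y j"
      then have "m \<le> ee j" unfolding m_def by (intro Least_le) auto
      then show False using \<open>ee j < ee i\<close> i by simp
    qed
  qed
  show ?thesis
  proof (cases "x i < y i")
    case True then show ?thesis using min unfolding lexf_def by blast
  next
    case False then have "y i < x i" using i by simp
    then show ?thesis using min unfolding lexf_def by (metis (no_types))
  qed
qed

lemma lexf_add: "lexf x y \<Longrightarrow> lexf (x + z) (y + z)"
  by (auto simp: lexf_def)

definition lexE :: "'n::finite ex \<Rightarrow> 'n ex \<Rightarrow> bool" where
  "lexE x y \<longleftrightarrow> lexf (fst x) (fst y) \<or> (fst x = fst y \<and> lexf (snd x) (snd y))"

definition ordE :: "'n::finite ex \<Rightarrow> 'n ex \<Rightarrow> bool" where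
  "ordE x y \<longleftrightarrow> mdeg (fst x) < mdeg (fst y) \<or> (mdeg (fst x) = mdeg (fst y) \<and>
     (mdeg (snd x) < mdeg (snd y) \<or> (mdeg (snd x) = mdeg (snd y) \<and> lexE x y)))"

lemma ordE_irrefl: "\<not> ordE x x"
  by (auto simp: ordE_def lexE_def lexf_irrefl)

lemma lexE_trans: "lexE x y \<Longrightarrow> lexE y z \<Longrightarrow> lexE x z"
  unfolding lexE_def by (elim disjE conjE) (auto intro: lexf_trans)

lemma ordE_trans: "ordE x y \<Longrightarrow> ordE y z \<Longrightarrow> ordE x z"
  unfolding ordE_def by (elim disjE conjE) (auto intro: lexE_trans)

lemma ordE_total: "x \<noteq> y \<Longrightarrow> ordE x y \<or> ordE y x"
proof -
  assume "x \<noteq> y"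
  have "lexE x y \<or> lexE y x"
  proof (cases "fst x = fst y")
    case True then have "snd x \<noteq> snd y" using \<open>x \<noteq> y\<close> by (simp add: prod_eq_iff)
    then show ?thesis using lexf_total[of "snd x" "snd y"] True unfolding lexE_def by auto
  next
    case False then show ?thesis using lexf_total[of "fst x" "fst y"] unfolding lexE_def by auto
  qed
  then show ?thesis unfolding ordE_def by linarith
qed

lemma ordE_add: "ordE x y \<Longrightarrow> ordE (x + z) (y + z)"
proof -
  assume a: "ordE x y"
  have l: "lexE x y \<Longrightarrow> lexE (x + z) (y + z)"
    unfolding lexE_def by (elim disjE conjE) (simp_all add: lexf_add)
  show ?thesis using a l unfolding ordE_def by (simp add: mdeg_add) linarith
qed

lemma ordE_mdeg: "ordE x y \<Longrightarrow> mdeg (fst x) \<le> mdeg (fst y)"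
  unfolding ordE_def by auto

lemma finite_min:
  assumes "finite T" "T \<noteq> {}"
  shows "\<exists>m\<in>T. \<forall>x\<in>T. x \<noteq> m \<longrightarrow> ordE m x"
  using assms
proof (induction T rule: finite_ne_induct)
  case (singleton x) then show ?case by auto
next
  case (insert x F)
  then obtain m where m: "m \<in> F" "\<forall>y\<in>F. y \<noteq> m \<longrightarrow> ordE m y" by auto
  show ?case
  proof (cases "ordE x m")
    case True
    then show ?thesis using m insert.hyps by (intro bexI[of _ x]) (auto intro: ordE_trans)
  next
    case False
    then have "ordE m x" using ordE_total m insert.hyps by metis
    then show ?thesis using m by (intro bexI[of _ m]) auto
  qed
qed

lemma exists_min:
  assumes "S \<noteq> {}"
  shows "\<exists>m\<in>S. \<forall>x\<in>S. x \<noteq> m \<longrightarrow> ordE m (x :: 'n::finite ex)"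
proof -
  define d1 where "d1 = (LEAST d. \<exists>x\<in>S. mdeg (fst x) = d)"
  obtain x0 where "x0 \<in> S" using assms by auto
  have h1: "\<exists>x\<in>S. mdeg (fst x) = d1" unfolding d1_def
    by (rule LeastI[of _ "mdeg (fst x0)"]) (use \<open>x0 \<in> S\<close> in auto)
  have l1: "\<And>x. x \<in> S \<Longrightarrow> d1 \<le> mdeg (fst x)" unfolding d1_def by (auto intro: Least_le)
  define S1 where "S1 = {x\<in>S. mdeg (fst x) = d1}"
  define d2 where "d2 = (LEAST d. \<exists>x\<in>S1. mdeg (snd x) = d)"
  obtain x1 where "x1 \<in> S1" using h1 S1_def by auto
  have h2: "\<exists>x\<in>S1. mdeg (snd x) = d2" unfolding d2_def
    by (rule LeastI[of _ "mdeg (snd x1)"]) (use \<open>x1 \<in> S1\<close> in auto)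
  have l2: "\<And>x. x \<in> S1 \<Longrightarrow> d2 \<le> mdeg (snd x)" unfolding d2_def by (auto intro: Least_le)
  define S2 where "S2 = {x\<in>S1. mdeg (snd x) = d2}"
  have le: "\<And>a::'n\<Rightarrow>nat. a \<le> (\<lambda>_. mdeg a)"
    unfolding le_fun_def mdeg_def by (auto intro: member_le_sum)
  have "S2 \<subseteq> {x. x \<le> ((\<lambda>_. d1), (\<lambda>_. d2))}"
    unfolding S2_def S1_def using le by (auto simp: less_eq_prod_def)
  then have fin: "finite S2" using fin_le finite_subset by blast
  have "S2 \<noteq> {}" using h2 unfolding S2_def by blast
  then obtain m where m: "m \<in> S2" "\<forall>x\<in>S2. x \<noteq> m \<longrightarrow> ordE m x"
    using finite_min[OF fin] by auto
  have "\<forall>x\<in>S. x \<noteq> m \<longrightarrow> ordE m x"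
  proof (intro ballI impI)
    fix x assume x: "x \<in> S" "x \<noteq> m"
    have md: "mdeg (fst m) = d1" "mdeg (snd m) = d2" using m(1) by (auto simp: S2_def S1_def)
    show "ordE m x"
    proof (cases "mdeg (fst x) = d1")
      case False then show ?thesis using l1[OF x(1)] md unfolding ordE_def by auto
    next
      case True
      then have xS1: "x \<in> S1" using x S1_def by auto
      show ?thesis
      proof (cases "mdeg (snd x) = d2")
        case False then show ?thesis using l2[OF xS1] md True unfolding ordE_def by auto
      next
        case True2: True
        then have "x \<in> S2" using xS1 S2_def by auto
        then show ?thesis using m x by auto
      qed
    qed
  qed
  then show ?thesis using m(1) S2_def S1_def by auto
qed

lemma domain:
  fixes f g :: "'n::finite ps"
  assumes f: "coef f (a1, b1) \<noteq> 0" "mdeg a1 \<le> p" and g: "coef g (a2, b2) \<noteq> 0" "mdeg a2 \<le> q"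
  shows "\<exists>a b. coef (f * g) (a, b) \<noteq> 0 \<and> mdeg a \<le> p + q"
proof -
  obtain x0 where x0: "x0 \<in> {x. coef f x \<noteq> 0}" "\<forall>x\<in>{x. coef f x \<noteq> 0}. x \<noteq> x0 \<longrightarrow> ordE x0 x"
  proof -
    have ne: "{x. coef f x \<noteq> 0} \<noteq> {}" using f by auto
    show ?thesis using exists_min[OF ne] that by blast
  qed
  obtain y0 where y0: "y0 \<in> {x. coef g x \<noteq> 0}" "\<forall>x\<in>{x. coef g x \<noteq> 0}. x \<noteq> y0 \<longrightarrow> ordE y0 x"
  proof -
    have ne: "{x. coef g x \<noteq> 0} \<noteq> {}" using g by auto
    show ?thesis using exists_min[OF ne] that by blast
  qed
  have dx: "mdeg (fst x0) \<le> p"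
  proof (cases "(a1, b1) = x0")
    case True then show ?thesis using f by auto
  next
    case False then show ?thesis using x0 f ordE_mdeg[of x0 "(a1, b1)"] by auto
  qed
  have dy: "mdeg (fst y0) \<le> q"
  proof (cases "(a2, b2) = y0")
    case True then show ?thesis using g by auto
  next
    case False then show ?thesis using y0 g ordE_mdeg[of y0 "(a2, b2)"] by auto
  qed
  let ?s = "x0 + y0"
  have s_le: "x0 \<le> ?s" by (rule ex_le_add)
  have "coef (f * g) ?s = coef f x0 * coef g (?s - x0) + (\<Sum>x\<in>{x. x \<le> ?s} - {x0}. coef f x * coef g (?s - x))"
    unfolding coef_mult using s_le by (subst sum.remove[of _ x0]) (auto simp: fin_le)
  also have "(\<Sum>x\<in>{x. x \<le> ?s} - {x0}. coef f x * coef g (?s - x)) = 0"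
  proof (rule sum.neutral, intro ballI)
    fix x assume x: "x \<in> {x. x \<le> ?s} - {x0}"
    let ?y = "?s - x"
    have "x \<le> ?s" using x by simp
    then have xy: "x + ?y = ?s" by (rule ex_add_diff)
    show "coef f x * coef g ?y = 0"
    proof (rule ccontr)
      assume "coef f x * coef g ?y \<noteq> 0"
      then have cf: "coef f x \<noteq> 0" and cg: "coef g ?y \<noteq> 0" by auto
      have o1: "ordE x0 x" using x0(2) cf x by blast
      have o2: "ordE (x0 + y0) (x + y0)" using ordE_add[OF o1] .
      have "ordE (x0 + y0) (x + ?y)"
      proof (cases "?y = y0")
        case True then show ?thesis using o2 by simp
      next
        case False
        then have "ordE y0 ?y" using y0(2) cg by blast
        then have "ordE (y0 + x) (?y + x)" by (rule ordE_add)
        then have "ordE (x + y0) (x + ?y)" by (simp add: add.commute)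
        then show ?thesis using o2 ordE_trans by blast
      qed
      then show False using xy ordE_irrefl by metis
    qed
  qed
  finally have "coef (f * g) ?s = coef f x0 * coef g y0" by (simp add: ex_add_sub add.commute[of x0 y0])
  then have "coef (f * g) ?s \<noteq> 0" using x0(1) y0(1) by simp
  then have "coef (f * g) (fst ?s, snd ?s) \<noteq> 0" by (metis prod.collapse)
  moreover have "mdeg (fst ?s) \<le> p + q" using dx dy by (simp add: mdeg_add)
  ultimately show ?thesis by blast
qed




lemma sum_fun_apply: "(\<Sum>i\<in>S. (f i :: 'a \<Rightarrow> nat)) k = (\<Sum>i\<in>S. f i k)"
  by (induction S rule: infinite_finite_induct) auto

lemma ex_member_le_sum: "finite S \<Longrightarrow> i \<in> S \<Longrightarrow> (f i :: 'n ex) \<le> (\<Sum>j\<in>S. f j)"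
  unfolding less_eq_prod_def le_fun_def
  by (auto simp: fst_sum snd_sum sum_fun_apply intro!: member_le_sum)

definition Q :: "'i set \<Rightarrow> ('i \<Rightarrow> 'n::finite ex \<Rightarrow> complex) \<Rightarrow> 'n ex \<Rightarrow> complex" where
  "Q S c e = (\<Sum>m \<in> {m \<in> PiE S (\<lambda>_. {x. x \<le> e}). (\<Sum>i\<in>S. m i) = e}. \<Prod>i\<in>S. c i (m i))"

lemma Q_empty: "Q {} c e = (if e = 0 then 1 else 0)"
  by (simp add: Q_def)

lemma Q_insert:
  assumes S: "finite S" and x: "x \<notin> S"
  shows "Q (insert x S) c e = (\<Sum>y\<in>{y. y \<le> e}. c x y * Q S c (e - y))"
proof -
  define M' where "M' y = {g \<in> PiE S (\<lambda>_. {z. z \<le> e - y}). (\<Sum>i\<in>S. g i) = e - y}" for y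
  have fin: "finite (M' y)" for y
    unfolding M'_def by (rule finite_subset[of _ "PiE S (\<lambda>_. {z. z \<le> e - y})"]) (auto intro!: finite_PiE S fin_le)
  define M where "M = {m \<in> PiE (insert x S) (\<lambda>_. {x. x \<le> e}). (\<Sum>i\<in>insert x S. m i) = e}"
  have F3: "(fun_upd (snd p) x (fst p) x, restrict (fun_upd (snd p) x (fst p)) S) = p"
   and F4: "(snd p)(x := fst p) \<in> M" if p: "p \<in> Sigma {y. y \<le> e} M'" for p
  proof -
    obtain y g where pyg: "p = (y, g)" by (cases p)
    have y: "y \<le> e" and g: "g \<in> PiE S (\<lambda>_. {z. z \<le> e - y})" "(\<Sum>i\<in>S. g i) = e - y"
      using p pyg by (auto simp: M'_def)
    show "(fun_upd (snd p) x (fst p) x, restrict (fun_upd (snd p) x (fst p)) S) = p"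
      using g(1) x pyg by (auto simp: restrict_def PiE_def extensional_def fun_eq_iff)
    have sg: "(\<Sum>i\<in>insert x S. (g(x := y)) i) = e"
    proof -
      have "(\<Sum>i\<in>insert x S. (g(x := y)) i) = y + (\<Sum>i\<in>S. (g(x := y)) i)" using S x by simp
      also have "(\<Sum>i\<in>S. (g(x := y)) i) = (\<Sum>i\<in>S. g i)" using x by (intro sum.cong) auto
      finally show ?thesis using g(2) ex_add_diff[OF y] by simp
    qed
    have "g(x := y) \<in> PiE (insert x S) (\<lambda>_. {z. z \<le> e})"
      using g(1) y x by (auto simp: PiE_def extensional_def Pi_def intro: order_trans[OF _ ex_diff_le])
    then show "(snd p)(x := fst p) \<in> M"
      using sg pyg by (simp add: M_def)
  qed
  have F1: "(restrict m S)(x := m x) = m"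
   and F2: "(m x, restrict m S) \<in> Sigma {y. y \<le> e} M'"
   and F5: "c x (m x) * (\<Prod>i\<in>S. c i (restrict m S i)) = (\<Prod>i\<in>insert x S. c i (m i))"
   if m: "m \<in> M" for m
  proof -
    have m1: "m \<in> PiE (insert x S) (\<lambda>_. {x. x \<le> e})" and m2: "(\<Sum>i\<in>insert x S. m i) = e"
      using m by (auto simp: M_def)
    show "(restrict m S)(x := m x) = m"
      using m1 by (auto simp: restrict_def PiE_def extensional_def fun_eq_iff)
    have ms: "m x + (\<Sum>i\<in>S. m i) = e" using m2 S x by simp
    then have ms': "(\<Sum>i\<in>S. m i) = e - m x" by (metis ex_add_sub)
    have "m x \<le> e" using m1 by auto
    moreover have "restrict m S \<in> M' (m x)"
    proof -
      have "(\<Sum>i\<in>S. restrict m S i) = e - m x" using ms' by (simp add: restrict_def)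
      moreover have "restrict m S \<in> PiE S (\<lambda>_. {z. z \<le> e - m x})"
        using ex_member_le_sum[OF S, of _ m] ms' by (auto simp: restrict_def)
      ultimately show ?thesis by (simp add: M'_def)
    qed
    ultimately show "(m x, restrict m S) \<in> Sigma {y. y \<le> e} M'" by simp
    have "(\<Prod>i\<in>S. c i (restrict m S i)) = (\<Prod>i\<in>S. c i (m i))" by (intro prod.cong) auto
    then show "c x (m x) * (\<Prod>i\<in>S. c i (restrict m S i)) = (\<Prod>i\<in>insert x S. c i (m i))"
      using S x by simp
  qed
  have "Q (insert x S) c e = (\<Sum>p \<in> Sigma {y. y \<le> e} M'. c x (fst p) * (\<Prod>i\<in>S. c i (snd p i)))"
    unfolding Q_def M_def[symmetric]
    by (rule sum.reindex_bij_witness[where i="\<lambda>p. (snd p)(x := fst p)" and j="\<lambda>m. (m x, restrict m S)"])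
       (simp_all only: fst_conv snd_conv, (erule F1 F2 F3 F4 F5)+)
  also have "\<dots> = (\<Sum>y\<in>{y. y \<le> e}. \<Sum>g\<in>M' y. c x y * (\<Prod>i\<in>S. c i (g i)))"
    by (subst sum.Sigma) (auto simp: fin_le fin case_prod_unfold)
  also have "\<dots> = (\<Sum>y\<in>{y. y \<le> e}. c x y * Q S c (e - y))"
    by (simp add: Q_def M'_def sum_distrib_left)
  finally show ?thesis .
qed

definition toP :: "'n fps2 \<Rightarrow> 'n::finite ps" where
  "toP F = Abs_ps (\<lambda>(a, b). F a b)"

lemma coef_toP[simp]: "coef (toP F) (a, b) = F a b"
  by (simp add: toP_def)

lemma Q_prod: "finite S \<Longrightarrow> Q S c e = coef (\<Prod>i\<in>S. Abs_ps (c i)) e"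
proof (induction S arbitrary: e rule: finite_induct)
  case empty
  then show ?case by (simp add: Q_empty coef_1)
next
  case (insert x S)
  then show ?case by (simp add: Q_insert coef_mult)
qed

lemma prodcoeff_Q: "prodcoeff S F \<gamma> \<epsilon> = Q S (\<lambda>i x. F i (fst x) (snd x)) (\<gamma>, \<epsilon>)"
proof -
  have B: "{a. a \<le> \<gamma>} \<times> {b. b \<le> \<epsilon>} = {x. x \<le> (\<gamma>, \<epsilon>)}" by (auto simp: less_eq_prod_def)
  have C: "((\<lambda>k. \<Sum>i\<in>S. fst (m i) k) = \<gamma> \<and> (\<lambda>k. \<Sum>i\<in>S. snd (m i) k) = \<epsilon>) \<longleftrightarrow> (\<Sum>i\<in>S. m i) = (\<gamma>, \<epsilon>)" for m
    by (simp add: prod_eq_iff fst_sum snd_sum sum_fun_apply fun_eq_iff)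
  show ?thesis unfolding prodcoeff_def Q_def B C by simp
qed

lemma prodcoeff_prod: "finite S \<Longrightarrow> prodcoeff S F \<gamma> \<epsilon> = coef (\<Prod>i\<in>S. toP (F i)) (\<gamma>, \<epsilon>)"
proof -
  assume S: "finite S"
  have "toP (F i) = Abs_ps (\<lambda>x. F i (fst x) (snd x))" for i
    unfolding toP_def by (simp add: case_prod_unfold)
  then show ?thesis using Q_prod[OF S, of "\<lambda>i x. F i (fst x) (snd x)"] prodcoeff_Q[of S F \<gamma> \<epsilon>] by simp
qed




lemma uv_mon: "(\<And>i. uv (A i) 1) \<Longrightarrow> uv (mon A \<alpha>) (mdeg \<alpha>)"
proof -
  assume h: "\<And>i. uv (A i) 1"
  have "uv (\<Prod>i\<in>UNIV. A i ^ \<alpha> i) (\<Sum>i\<in>UNIV. \<alpha> i * 1)"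
  proof (rule uv_prod)
    fix i show "uv (A i ^ \<alpha> i) (\<alpha> i * 1)" using uv_power[OF h] by blast
  qed simp
  then show ?thesis by (simp add: mon_def mdeg_def)
qed

lemma prodcoeff_mon:
  fixes A :: "'n::finite \<Rightarrow> 'n fps2"
  shows "prodcoeff {(i, j). j < \<alpha> i} (\<lambda>(i, j). A i) \<gamma> \<epsilon> = coef (mon (\<lambda>i. toP (A i)) \<alpha>) (\<gamma>, \<epsilon>)"
proof -
  have S: "{(i, j). j < \<alpha> i} = Sigma UNIV (\<lambda>i. {..<\<alpha> i})" by auto
  have fin: "finite {(i, j). j < \<alpha> i}" unfolding S by auto
  have "prodcoeff {(i, j). j < \<alpha> i} (\<lambda>(i, j). A i) \<gamma> \<epsilon> = coef (\<Prod>p\<in>{(i, j). j < \<alpha> i}. toP ((\<lambda>(i, j). A i) p)) (\<gamma>, \<epsilon>)"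
    by (rule prodcoeff_prod[OF fin])
  also have "(\<Prod>p\<in>{(i, j). j < \<alpha> i}. toP ((\<lambda>(i, j). A i) p)) = (\<Prod>i\<in>UNIV. \<Prod>j\<in>{..<\<alpha> i}. toP (A i))"
    unfolding S by (subst prod.Sigma) (auto simp: case_prod_unfold)
  also have "\<dots> = mon (\<lambda>i. toP (A i)) \<alpha>" by (simp add: mon_def)
  finally show ?thesis .
qed

lemma P_subst:
  fixes A :: "'n::finite \<Rightarrow> 'n fps2" and \<psi> :: "'n fps2"
  assumes hA: "\<And>i. uv (toP (A i)) 1" and N: "mdeg \<gamma> \<le> N"
  shows "coef (P (\<lambda>i. toP (A i)) \<psi> N) (\<gamma>, \<epsilon>) = subst \<psi> A \<gamma> \<epsilon>"
proof -
  let ?A = "\<lambda>i. toP (A i)"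
  have set: "{(\<alpha>, \<beta>). mdeg \<alpha> \<le> mdeg \<gamma> \<and> \<beta> \<le> \<epsilon>} = Dn (mdeg \<gamma>) \<times> {\<beta>. \<beta> \<le> \<epsilon>}"
    by (auto simp: Dn_def)
  have "subst \<psi> A \<gamma> \<epsilon> = (\<Sum>\<alpha>\<in>Dn (mdeg \<gamma>). \<Sum>\<beta>\<in>{\<beta>. \<beta> \<le> \<epsilon>}. \<psi> \<alpha> \<beta> * coef (mon ?A \<alpha>) (\<gamma>, \<epsilon> - \<beta>))"
    unfolding subst_def set
    by (subst sum.cartesian_product[symmetric]) (simp add: prodcoeff_mon fun_diff_def)
  also have "\<dots> = (\<Sum>\<alpha>\<in>Dn (mdeg \<gamma>). coef (vc (\<psi> \<alpha>) * mon ?A \<alpha>) (\<gamma>, \<epsilon>))"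
    by (simp add: coef_vc_mult)
  also have "\<dots> = (\<Sum>\<alpha>\<in>Dn N. coef (vc (\<psi> \<alpha>) * mon ?A \<alpha>) (\<gamma>, \<epsilon>))"
  proof (rule sum.mono_neutral_left)
    show "finite (Dn N :: ('n \<Rightarrow> nat) set)" by (rule finite_Dn)
    show "Dn (mdeg \<gamma>) \<subseteq> Dn N" using N by (auto simp: Dn_def)
    show "\<forall>\<alpha>\<in>Dn N - Dn (mdeg \<gamma>). coef (vc (\<psi> \<alpha>) * mon ?A \<alpha>) (\<gamma>, \<epsilon>) = 0"
    proof
      fix \<alpha> :: "'n \<Rightarrow> nat" assume "\<alpha> \<in> Dn N - Dn (mdeg \<gamma>)"
      then have lt: "mdeg \<gamma> < mdeg \<alpha>" by (auto simp: Dn_def)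
      have "uv (vc (\<psi> \<alpha>) * mon ?A \<alpha>) (mdeg \<alpha>)" by (rule uv_mult_left, rule uv_mon, rule hA)
      then show "coef (vc (\<psi> \<alpha>) * mon ?A \<alpha>) (\<gamma>, \<epsilon>) = 0" using lt by (auto simp: uv_def)
    qed
  qed
  also have "\<dots> = coef (P ?A \<psi> N) (\<gamma>, \<epsilon>)" by (simp add: P_def coef_sum)
  finally show ?thesis by simp
qed

lemma P_zero: "coef (P A \<psi> 0) (0, \<epsilon>) = \<psi> 0 \<epsilon>"
proof -
  have "Dn 0 = {0 :: 'a \<Rightarrow> nat}" by (auto simp: Dn_def mdeg_zero_iff)
  then have "P A \<psi> 0 = vc (\<psi> 0) * mon A 0" by (simp add: P_def)
  also have "mon A 0 = 1" by (simp add: mon_def)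
  finally show ?thesis by (simp add: coef_vc zero_fun_def)
qed

lemma det_row_sum:
  fixes J :: "'a::comm_ring_1^'n::finite^'n"
  shows "finite T \<Longrightarrow> det (\<chi> i. if i = k then (\<Sum>l\<in>T. f l) else row i J) =
      (\<Sum>l\<in>T. det (\<chi> i. if i = k then f l else row i J))"
proof (induction T rule: finite_induct)
  case empty
  show ?case by (simp only: sum.empty det_row_0)
next
  case (insert x T)
  have e: "sum f (insert x T) = f x + sum f T" using insert by simp
  show ?case
    unfolding e using det_row_add[of k "\<lambda>i. f x" "\<lambda>i. \<Sum>l\<in>T. f l" "\<lambda>i. row i J"] insert by simp
qed

lemma cramer_ring:
  fixes J :: "'a::comm_ring_1^'n::finite^'n" and w :: "'a^'n"
  shows "det (\<chi> i. if i = k then (\<Sum>l\<in>UNIV. w$l *s row l J) else row i J) = w$k * det J"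
proof -
  have "det (\<chi> i. if i = k then (\<Sum>l\<in>UNIV. w$l *s row l J) else row i J) =
       (\<Sum>l\<in>UNIV. w$l * det (\<chi> i. if i = k then row l J else row i J))"
    by (simp add: det_row_sum det_row_mul[of k "w$_" "\<lambda>i. row _ J" "\<lambda>i. row i J"])
  also have "\<dots> = (\<Sum>l\<in>UNIV. if l = k then w$k * det J else 0)"
  proof (rule sum.cong[OF refl])
    fix l
    show "w$l * det (\<chi> i. if i = k then row l J else row i J) = (if l = k then w$k * det J else 0)"
    proof (cases "l = k")
      case True
      have "(\<chi> i. if i = k then row k J else row i J) = J" by (simp add: vec_eq_iff row_def)
      then show ?thesis unfolding True by simp
    next
      case False
      have "row k (\<chi> i. if i = k then row l J else row i J) = row l (\<chi> i. if i = k then row l J else row i J)"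
        using False by (simp add: row_def vec_eq_iff)
      then have "det (\<chi> i. if i = k then row l J else row i J) = 0"
        using False by (intro det_identical_rows[of k l]) auto
      then show ?thesis using False by simp
    qed
  qed
  also have "\<dots> = w$k * det J" by simp
  finally show ?thesis .
qed

lemma dps_toP: "dps j (toP F) = toP (du F j)"
proof (rule ps_eqI)
  fix x :: "'a ex"
  obtain a b where x: "x = (a, b)" by (cases x)
  have "(a, b) + dl j = (a(j := a j + 1), b)" by (auto simp: dl_def fun_eq_iff)
  then show "coef (dps j (toP F)) x = coef (toP (du F j)) x"
    unfolding x by (simp add: coef_dps du_def)
qed

lemma coef_det_J:
  fixes A :: "'n::finite \<Rightarrow> 'n fps2"
  shows "coef (det (\<chi> i j. dps j (toP (A i)) :: 'n ps^'n^'n)) (a, b) = jac_det A a b"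
  unfolding det_def jac_det_def
  by (simp add: coef_sum coef_of_int_mult prodcoeff_prod dps_toP)

lemma mdeg_dl: "mdeg (fst (dl j)) = 1"
  by (simp add: dl_def mdeg_def)

lemma step:
  fixes A :: "'n::finite \<Rightarrow> 'n fps2" and \<psi> :: "'n fps2"
  assumes hA: "\<And>i. uv (toP (A i)) 1"
    and hdet: "coef (det (\<chi> i j. dps j (toP (A i)) :: 'n ps^'n^'n)) (a0, b0) \<noteq> 0" "mdeg a0 \<le> \<nu>"
    and hM: "\<And>\<gamma> \<epsilon>. mdeg \<gamma> \<le> Suc r * (\<nu> + 1) \<Longrightarrow> subst \<psi> A \<gamma> \<epsilon> = 0"
    and g: "mdeg \<gamma> \<le> r * (\<nu> + 1)"
  shows "subst (dt \<psi> k) A \<gamma> \<epsilon> = 0"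
proof -
  define M where "M = Suc r * (\<nu> + 1)"
  let ?A = "\<lambda>i. toP (A i)"
  define J where "J = (\<chi> i j. dps j (?A i) :: 'n ps^'n^'n)"
  define W where "W i = P ?A (dt \<psi> i) M" for i
  define D where "D j = dps j (P ?A \<psi> (M + 1))" for j
  have P0: "coef (P ?A \<psi> (M + 1)) (c, d) = 0" if "mdeg c \<le> M" for c d
    using P_subst[where A=A, OF hA, where \<gamma>=c and N="M + 1" and \<psi>=\<psi> and \<epsilon>=d] hM[of c d] that by (simp add: M_def)
  have uvD: "uv (D j) M" for j
    unfolding uv_def
  proof (intro allI impI)
    fix a :: "'n \<Rightarrow> nat" and b assume a: "mdeg a < M"
    have e: "(a, b) + dl j = (a + fst (dl j), b + snd (dl j))" by (simp add: plus_prod_def)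
    have "mdeg (a + fst (dl j)) \<le> M" using a by (simp add: mdeg_add mdeg_dl)
    then show "coef (D j) (a, b) = 0" unfolding D_def coef_dps e using P0 by simp
  qed
  have chainD: "D j = (\<Sum>i\<in>UNIV. W i * dps j (?A i))" for j
    unfolding D_def W_def using chain[where N="M + 1" and j=j and A="?A" and \<psi>=\<psi>] by simp
  define w where "w = (\<chi> i. W i)"
  have Dvec: "(\<Sum>l\<in>UNIV. w$l *s row l J) = (\<chi> j. D j)"
    by (simp add: vec_eq_iff row_def w_def J_def chainD)
  have cr: "det (\<chi> i. if i = k then (\<chi> j. D j) else row i J) = W k * det J"
    using cramer_ring[of k w J] unfolding Dvec by (simp add: w_def)
  have "uv (det (\<chi> i. if i = k then (\<chi> j. D j) else row i J)) M"
    unfolding det_def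
  proof (rule uv_sum, rule uv_of_int_mult)
    fix p
    let ?X = "(\<chi> i. if i = k then (\<chi> j. D j) else row i J)"
    have "(\<Prod>i\<in>UNIV. ?X $ i $ p i) = ?X $ k $ p k * (\<Prod>i\<in>UNIV - {k}. ?X $ i $ p i)"
      by (rule prod.remove) auto
    moreover have "?X $ k $ p k = D (p k)" by simp
    ultimately show "uv (\<Prod>i\<in>UNIV. ?X $ i $ p i) M" using uvD by (simp add: uv_mult_right)
  qed
  then have uvWJ: "uv (W k * det J) M" using cr by simp
  have Wk0: "coef (W k) (\<gamma>, \<epsilon>) = 0"
  proof (rule ccontr)
    assume "coef (W k) (\<gamma>, \<epsilon>) \<noteq> 0"
    then obtain a b where ab: "coef (W k * det J) (a, b) \<noteq> 0" "mdeg a \<le> r * (\<nu> + 1) + \<nu>"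
      using domain[of "W k" \<gamma> \<epsilon> "r * (\<nu> + 1)" "det J" a0 b0 \<nu>] g hdet unfolding J_def by blast
    have "mdeg a < M" using ab(2) by (simp add: M_def)
    then show False using uvWJ ab(1) by (auto simp: uv_def)
  qed
  have "mdeg \<gamma> \<le> M" using g by (simp add: M_def)
  then show ?thesis using P_subst[where A=A, OF hA, where \<gamma>=\<gamma> and N=M and \<psi>="dt \<psi> k" and \<epsilon>=\<epsilon>] Wk0 by (simp add: W_def)
qed

lemma base:
  fixes A :: "'n::finite \<Rightarrow> 'n fps2" and \<psi> :: "'n fps2"
  assumes hA: "\<And>i. uv (toP (A i)) 1" and h: "subst \<psi> A 0 \<epsilon> = 0"
  shows "\<psi> 0 \<epsilon> = 0"
  using P_subst[where A=A, OF hA, where \<gamma>=0 and N=0 and \<psi>=\<psi> and \<epsilon>=\<epsilon>] P_zero[of "\<lambda>i. toP (A i)" \<psi> \<epsilon>] h by simp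

lemma main_ind:
  fixes A :: "'n::finite \<Rightarrow> 'n fps2"
  assumes hA: "\<And>i. uv (toP (A i)) 1"
    and hdet: "coef (det (\<chi> i j. dps j (toP (A i)) :: 'n ps^'n^'n)) (a0, b0) \<noteq> 0" "mdeg a0 \<le> \<nu>"
  shows "\<forall>\<psi>. (\<forall>\<gamma> \<epsilon>. mdeg \<gamma> \<le> r * (\<nu> + 1) \<longrightarrow> subst \<psi> A \<gamma> \<epsilon> = 0) \<longrightarrow> (\<forall>\<alpha> \<beta>. mdeg \<alpha> \<le> r \<longrightarrow> \<psi> \<alpha> \<beta> = 0)"
proof (induction r)
  case 0
  show ?case
  proof (intro allI impI)
    fix \<psi> :: "'n fps2" and \<alpha> :: "'n \<Rightarrow> nat" and \<beta>
    assume h: "\<forall>\<gamma> \<epsilon>. mdeg \<gamma> \<le> 0 * (\<nu> + 1) \<longrightarrow> subst \<psi> A \<gamma> \<epsilon> = 0" and a: "mdeg \<alpha> \<le> 0"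
    then have "\<alpha> = 0" using mdeg_zero_iff by auto
    then show "\<psi> \<alpha> \<beta> = 0" using base[where A=A, OF hA, where \<psi>=\<psi> and \<epsilon>=\<beta>] h by simp
  qed
next
  case (Suc r)
  show ?case
  proof (intro allI impI)
    fix \<psi> :: "'n fps2" and \<alpha> :: "'n \<Rightarrow> nat" and \<beta>
    assume h: "\<forall>\<gamma> \<epsilon>. mdeg \<gamma> \<le> Suc r * (\<nu> + 1) \<longrightarrow> subst \<psi> A \<gamma> \<epsilon> = 0" and a: "mdeg \<alpha> \<le> Suc r"
    have dt0: "dt \<psi> k \<alpha>' \<beta>' = 0" if "mdeg \<alpha>' \<le> r" for k \<alpha>' \<beta>'
    proof -
      have "\<forall>\<gamma> \<epsilon>. mdeg \<gamma> \<le> r * (\<nu> + 1) \<longrightarrow> subst (dt \<psi> k) A \<gamma> \<epsilon> = 0"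
        using step[where A=A, OF hA hdet, where r=r and \<psi>=\<psi>] h by blast
      then show ?thesis using Suc.IH that by blast
    qed
    show "\<psi> \<alpha> \<beta> = 0"
    proof (cases "\<alpha> = 0")
      case True
      then show ?thesis using base[where A=A, OF hA, where \<psi>=\<psi> and \<epsilon>=\<beta>] h by simp
    next
      case False
      then obtain k where k: "\<alpha> k \<noteq> 0" by (auto simp: fun_eq_iff)
      define \<alpha>' where "\<alpha>' = \<alpha>(k := \<alpha> k - 1)"
      have "mdeg \<alpha>' + \<alpha> k = mdeg \<alpha> + (\<alpha> k - 1)" unfolding \<alpha>'_def by (rule mdeg_upd)
      then have "mdeg \<alpha>' \<le> r" using a k by linarith
      then have "dt \<psi> k \<alpha>' \<beta> = 0" by (rule dt0)
      moreover have "\<alpha>'(k := \<alpha>' k + 1) = \<alpha>" "\<alpha>' k + 1 = \<alpha> k" using k by (auto simp: \<alpha>'_def)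
      moreover have "(1 + of_nat (\<alpha>' k) :: complex) \<noteq> 0" by (metis of_nat_Suc of_nat_eq_0_iff nat.distinct(1))
      ultimately show ?thesis using k by (simp add: dt_def)
    qed
  qed
qed

theorem lemma4p13:
  fixes A :: "'n::finite \<Rightarrow> 'n fps2" and \<psi> :: "'n fps2" and \<nu> r :: nat
  assumes "jac_det A \<noteq> (\<lambda>_ _. 0)"
    and "\<forall>i \<beta>. A i (\<lambda>_. 0) \<beta> = 0"
    and "ord_u (jac_det A) \<le> enat \<nu>"
    and "ord_u (subst \<psi> A) > enat (r * (\<nu> + 1))"
  shows "ord_u \<psi> > enat r"
proof -
  have hA: "uv (toP (A i)) 1" for i
    unfolding uv_def
  proof (intro allI impI)
    fix a b :: "'n \<Rightarrow> nat" assume "mdeg a < 1"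
    then have "a = 0" using mdeg_zero_iff by auto
    then have "a = (\<lambda>_. 0)" by (simp add: zero_fun_def)
    then show "coef (toP (A i)) (a, b) = 0" using assms(2) by simp
  qed
  have "\<exists>a b. jac_det A a b \<noteq> 0 \<and> mdeg a \<le> \<nu>"
  proof (rule ccontr)
    assume "\<not> (\<exists>a b. jac_det A a b \<noteq> 0 \<and> mdeg a \<le> \<nu>)"
    then have h: "\<And>a b. jac_det A a b \<noteq> 0 \<Longrightarrow> \<nu> < mdeg a" by (meson not_le)
    have "enat (Suc \<nu>) \<le> ord_u (jac_det A)"
      unfolding ord_u_def
    proof (rule INF_greatest)
      fix a assume "a \<in> {\<alpha>. \<exists>\<beta>. jac_det A \<alpha> \<beta> \<noteq> 0}"
      then have "\<nu> < mdeg a" using h by blast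
      then show "enat (Suc \<nu>) \<le> enat (mdeg a)" by simp
    qed
    then have "enat (Suc \<nu>) \<le> enat \<nu>" using assms(3) by (rule order_trans)
    then show False by simp
  qed
  then obtain a0 b0 where d: "jac_det A a0 b0 \<noteq> 0" "mdeg a0 \<le> \<nu>" by blast
  have hdet: "coef (det (\<chi> i j. dps j (toP (A i)) :: 'n ps^'n^'n)) (a0, b0) \<noteq> 0"
    using d by (simp add: coef_det_J)
  have hs: "\<forall>\<gamma> \<epsilon>. mdeg \<gamma> \<le> r * (\<nu> + 1) \<longrightarrow> subst \<psi> A \<gamma> \<epsilon> = 0"
  proof (intro allI impI)
    fix \<gamma> \<epsilon> :: "'n \<Rightarrow> nat" assume g: "mdeg \<gamma> \<le> r * (\<nu> + 1)"
    show "subst \<psi> A \<gamma> \<epsilon> = 0"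
    proof (rule ccontr)
      assume "subst \<psi> A \<gamma> \<epsilon> \<noteq> 0"
      then have "\<gamma> \<in> {\<alpha>. \<exists>\<beta>. subst \<psi> A \<alpha> \<beta> \<noteq> 0}" by blast
      then have "ord_u (subst \<psi> A) \<le> enat (mdeg \<gamma>)"
        unfolding ord_u_def by (rule INF_lower)
      also have "\<dots> \<le> enat (r * (\<nu> + 1))" using g by simp
      finally have "ord_u (subst \<psi> A) \<le> enat (r * (\<nu> + 1))" .
      then show False using assms(4) by (simp add: not_less[symmetric])
    qed
  qed
  have z: "\<forall>\<alpha> \<beta>. mdeg \<alpha> \<le> r \<longrightarrow> \<psi> \<alpha> \<beta> = 0"
    using main_ind[where A=A and r=r and \<nu>=\<nu>, OF hA hdet d(2), THEN spec[where x=\<psi>]] hs by (rule mp)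
  have "enat (Suc r) \<le> ord_u \<psi>"
    unfolding ord_u_def
  proof (rule INF_greatest)
    fix \<alpha> assume "\<alpha> \<in> {\<alpha>. \<exists>\<beta>. \<psi> \<alpha> \<beta> \<noteq> 0}"
    then obtain \<beta> where "\<psi> \<alpha> \<beta> \<noteq> 0" by blast
    then have "\<not> mdeg \<alpha> \<le> r" using z by blast
    then have "r < mdeg \<alpha>" by simp
    then show "enat (Suc r) \<le> enat (mdeg \<alpha>)" by simp
  qed
  then show ?thesis using Suc_ile_eq by blast
qed


end
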